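(* Let $\gamma_a,\gamma_s>0$, $\sigma_B>0$, $q>0$, $\varepsilon_a\in(0,2)$, and let $\beta_s$ be the piecewise linear coalbedo described in the context. Consider the system \[ \gamma_a T_a'=\varepsilon_a\sigma_B|T_s|^3T_s-2\varepsilon_a\sigma_B|T_a|^3T_a,\qquad \gamma_s T_s'=-\sigma_B|T_s|^3T_s+\varepsilon_a\sigma_B|T_a|^3T_a+q\beta_s(T_s). \] Assume that the equation $\sigma_B(1-\frac{\varepsilon_a}{2})T^4=q\beta_s(T)$ has exactly three solutions $T^*_{s,1}\in(0,T_{s,-})$, $T^*_{s,2}\in(T_{s,-},T_{s,+})$, $T^*_{s,3}>T_{s,+}$, and that the equation $\sigma_B T^4=q\beta_s(T)$ has exactly one positive solution. Let $\mathcal Q=(0,+\infty)^2$, \[ \mathcal Q_4=\{(T_a,T_s)\in\mathcal Q:\ T_s<2^{1/4}T_a,\ -\sigma_B T_s^4+\varepsilon_a\sigma_B T_a^4+q\beta_s(T_s)>0\}, \] and $\mathcal C_{\mathrm{right}}=\partial\mathcal Q_4\cap\mathcal Q$. Then for every initial condition in $\mathcal C_{\mathrm{right}}$ which is not an equilibrium point, the solution followed backward in time reaches the horizontal axis: there exists $\tau>0$ such that $T_s(-\tau)=0$ and $T_a(-\tau)>0$.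
   Context: The coalbedo is $\beta_s(T)=\beta_{s,-}$ for $T\le T_{s,-}$, $\beta_s(T)=\beta_{s,-}+(\beta_{s,+}-\beta_{s,-})\frac{T-T_{s,-}}{T_{s,+}-T_{s,-}}$ for $T\in[T_{s,-},T_{s,+}]$, and $\beta_s(T)=\beta_{s,+}$ for $T\ge T_{s,+}$, where $T_{s,+}>T_{s,-}>0$ and $\beta_{s,+}>\beta_{s,-}>0$. The equilibrium points of the system in $[0,\infty)^2$ are then $(2^{-1/4}T^*_{s,i},T^*_{s,i})$, $i=1,2,3$. *)

theory Defs
  imports "HOL-Analysis.Analysis"
begin

definition coalbedo :: "real \<Rightarrow> real \<Rightarrow> real \<Rightarrow> real \<Rightarrow> real \<Rightarrow> real" where
  "coalbedo Tm Tp bm bp T =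
     (if T \<le> Tm then bm
      else if T \<le> Tp then bm + (bp - bm) * (T - Tm) / (Tp - Tm)
      else bp)"

definition fa :: "real \<Rightarrow> real \<Rightarrow> real \<Rightarrow> real \<Rightarrow> real \<Rightarrow> real" where
  "fa ga sB ea Ta Ts = (ea * sB * \<bar>Ts\<bar>^3 * Ts - 2 * ea * sB * \<bar>Ta\<bar>^3 * Ta) / ga"

definition fs :: "real \<Rightarrow> real \<Rightarrow> real \<Rightarrow> real \<Rightarrow> (real \<Rightarrow> real) \<Rightarrow> real \<Rightarrow> real \<Rightarrow> real" where
  "fs gs sB ea q beta Ta Ts =
     (- sB * \<bar>Ts\<bar>^3 * Ts + ea * sB * \<bar>Ta\<bar>^3 * Ta + q * beta Ts) / gs"

definition Qquad :: "(real \<times> real) set" where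
  "Qquad = {p. fst p > 0 \<and> snd p > 0}"

definition Q4 :: "real \<Rightarrow> real \<Rightarrow> real \<Rightarrow> (real \<Rightarrow> real) \<Rightarrow> (real \<times> real) set" where
  "Q4 sB ea q beta = {(Ta, Ts). (Ta, Ts) \<in> Qquad \<and> Ts < root 4 2 * Ta \<and>
       - sB * Ts^4 + ea * sB * Ta^4 + q * beta Ts > 0}"

end

theory Submission
  imports Defs
begin
lemma ode_exists:
  fixes G :: "real \<times> real \<Rightarrow> real \<times> real" and L T :: real and y0 :: "real \<times> real"
  assumes L: "L > 0" and lip: "\<And>x y. norm (G x - G y) \<le> L * norm (x - y)" and T: "T > 0"
  shows "\<exists>Y. Y 0 = y0 \<and> (\<forall>s\<in>{0..T}. (Y has_vector_derivative G (Y s)) (at s within {0..T}))"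
proof -
  have cG: "continuous_on UNIV G"
    unfolding continuous_on_iff
  proof (intro ballI allI impI)
    fix x e :: real assume "e > 0"
    fix x :: "real \<times> real"
    show "\<exists>d>0. \<forall>x'\<in>UNIV. dist x' x < d \<longrightarrow> dist (G x') (G x) < e"
    proof (intro exI[of _ "e / L"] conjI ballI impI)
      show "e / L > 0" using \<open>e>0\<close> L by simp
      fix x' assume "dist x' x < e / L"
      then have "L * dist x' x < e" using L by (simp add: field_simps)
      moreover have "dist (G x') (G x) \<le> L * dist x' x" using lip[of x' x] by (simp add: dist_norm)
      ultimately show "dist (G x') (G x) < e" by linarith
    qed
  qed
  define c where "c t = max 0 (min T t)" for t :: real
  have c_in: "c t \<in> {0..T}" for t using T by (auto simp: c_def)
  have c_cont: "continuous_on UNIV c" unfolding c_def by (intro continuous_intros)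
  define w where "w s = exp (2 * L * s)" for s :: real
  define F where "F \<psi> s = G (w s *\<^sub>R \<psi> s)" for \<psi> :: "real \<Rightarrow> real \<times> real" and s
  define H where "H \<psi> t = exp (- 2 * L * t) *\<^sub>R (y0 + integral {0..t} (F \<psi>))" for \<psi> t
  define Pf where "Pf \<psi> t = H \<psi> (c t)" for \<psi> t
  have F_cont: "continuous_on UNIV (F \<psi>)" if "continuous_on UNIV \<psi>" for \<psi>
    unfolding F_def w_def
    by (intro continuous_on_compose2[OF cG] continuous_intros that) auto
  have H_cont: "continuous_on {0..T} (H \<psi>)" if "continuous_on UNIV \<psi>" for \<psi>
    unfolding H_def
    by (intro continuous_intros indefinite_integral_continuous_1 integrable_continuous_interval
        continuous_on_subset[OF F_cont[OF that]]) auto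
  have Pf_in: "Pf \<psi> \<in> bcontfun" if "continuous_on UNIV \<psi>" for \<psi>
  proof -
    have "continuous_on UNIV (Pf \<psi>)"
      unfolding Pf_def
      by (rule continuous_on_compose2[OF H_cont[OF that] c_cont]) (use c_in in auto)
    moreover have "range (Pf \<psi>) \<subseteq> H \<psi> ` {0..T}" using c_in by (auto simp: Pf_def)
    moreover have "bounded (H \<psi> ` {0..T})"
      by (intro compact_imp_bounded compact_continuous_image H_cont that) auto
    ultimately show ?thesis unfolding bcontfun_def using bounded_subset by blast
  qed
  define P where "P \<psi> = Bcontfun (Pf (apply_bcontfun \<psi>))" for \<psi>
  have P_app: "apply_bcontfun (P \<psi>) = Pf (apply_bcontfun \<psi>)" for \<psi>
    unfolding P_def by (rule Bcontfun_inverse[OF Pf_in]) simp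
  have contr: "dist (P a) (P b) \<le> (1/2) * dist a b" for a b
  proof (rule dist_bound)
    fix t
    define d where "d = dist a b"
    define c' where "c' = c t"
    have c': "0 \<le> c'" "c' \<le> T" using c_in unfolding c'_def by auto
    have ia: "F (apply_bcontfun a) integrable_on {0..c'}" for a
      by (intro integrable_continuous_interval continuous_on_subset[OF F_cont]) auto
    have diff: "Pf a t - Pf b t = exp (- 2 * L * c') *\<^sub>R integral {0..c'} (\<lambda>s. F a s - F b s)"
      unfolding Pf_def H_def c'_def[symmetric]
      by (simp add: integral_diff[OF ia ia] algebra_simps)
    have bnd: "norm (F a s - F b s) \<le> L * d * w s" for s
    proof -
      have "norm (F a s - F b s) \<le> L * norm (w s *\<^sub>R a s - w s *\<^sub>R b s)"
        unfolding F_def by (rule lip)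
      also have "\<dots> = L * w s * norm (a s - b s)"
        by (simp add: scaleR_diff_right[symmetric] w_def)
      also have "\<dots> \<le> L * w s * d"
        using dist_bounded[of a s b] L unfolding d_def dist_norm
        by (intro mult_left_mono) (auto simp: w_def)
      finally show ?thesis by (simp add: algebra_simps)
    qed
    have hi: "((\<lambda>s. L * d * w s) has_integral (d * w c' / 2 - d / 2)) {0..c'}"
    proof -
      have "((\<lambda>s. L * d * w s) has_integral ((\<lambda>s. d * w s / 2) c' - (\<lambda>s. d * w s / 2) 0)) {0..c'}"
        by (rule fundamental_theorem_of_calculus)
          (use c' in \<open>auto simp: w_def has_real_derivative_iff_has_vector_derivative[symmetric] intro!: derivative_eq_intros\<close>)
      then show ?thesis by (simp add: w_def)
    qed
    have "norm (integral {0..c'} (\<lambda>s. F a s - F b s)) \<le> integral {0..c'} (\<lambda>s. L * d * w s)"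
      by (rule integral_norm_bound_integral)
        (use ia hi bnd in \<open>auto intro: integrable_diff has_integral_integrable\<close>)
    also have "\<dots> = d * w c' / 2 - d / 2" using hi by (rule integral_unique)
    finally have n1: "norm (integral {0..c'} (\<lambda>s. F a s - F b s)) \<le> d * w c' / 2 - d / 2" .
    have "dist (Pf a t) (Pf b t) = exp (- 2 * L * c') * norm (integral {0..c'} (\<lambda>s. F a s - F b s))"
      by (simp add: dist_norm diff)
    also have "\<dots> \<le> exp (- 2 * L * c') * (d * w c' / 2 - d / 2)"
      by (intro mult_left_mono n1) auto
    also have "\<dots> = d / 2 - exp (- 2 * L * c') * d / 2"
      by (simp add: w_def algebra_simps exp_minus field_simps)
    also have "\<dots> \<le> d / 2" using zero_le_dist[of a b] unfolding d_def by simp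
    finally show "dist (P a t) (P b t) \<le> 1 / 2 * dist a b" by (simp add: P_app d_def)
  qed
  obtain \<psi> where fixpt: "P \<psi> = \<psi>" using banach_fix_type[of "1/2" P] contr by auto
  define Y where "Y t = y0 + integral {0..t} (F \<psi>)" for t
  have FY: "F \<psi> s = G (Y s)" if "s \<in> {0..T}" for s
  proof -
    have "\<psi> s = Pf \<psi> s" using fixpt P_app by metis
    also have "\<dots> = exp (- 2 * L * s) *\<^sub>R Y s" using that by (simp add: Pf_def H_def c_def Y_def)
    finally have "w s *\<^sub>R \<psi> s = Y s" by (simp add: w_def exp_minus[symmetric] exp_add[symmetric])
    then show ?thesis by (simp add: F_def)
  qed
  show ?thesis
  proof (intro exI[of _ Y] conjI ballI)
    show "Y 0 = y0" by (simp add: Y_def)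
    fix s assume s: "s \<in> {0..T}"
    have "((\<lambda>u. integral {0..u} (F \<psi>)) has_vector_derivative F \<psi> s) (at s within {0..T})"
      by (rule integral_has_vector_derivative[OF continuous_on_subset[OF F_cont] s]) auto
    then have "(Y has_vector_derivative F \<psi> s) (at s within {0..T})"
      unfolding Y_def by (intro derivative_eq_intros) auto
    then show "(Y has_vector_derivative G (Y s)) (at s within {0..T})" using FY[OF s] by simp
  qed
qed


lemma clamp_lip: "a \<le> b \<Longrightarrow> \<bar>max a (min b x) - max a (min b y)\<bar> \<le> \<bar>x - y\<bar>"
  for a b x y :: real by (auto simp: max_def min_def abs_if)

lemma pow4_lip:
  fixes x y b :: real
  assumes "0 \<le> x" "x \<le> b" "0 \<le> y" "y \<le> b"
  shows "\<bar>x^4 - y^4\<bar> \<le> 4 * b^3 * \<bar>x - y\<bar>"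
proof -
  have e: "x^4 - y^4 = (x - y) * (x^3 + x^2*y + x*y^2 + y^3)" by algebra
  have b0: "0 \<le> b" using assms by linarith
  have 1: "x^3 \<le> b^3" using assms by (intro power_mono) auto
  have 4: "y^3 \<le> b^3" using assms by (intro power_mono) auto
  have "x^2*y \<le> b^2*b" using assms b0 by (intro mult_mono power_mono) auto
  then have 2: "x^2*y \<le> b^3" by (simp add: power2_eq_square power3_eq_cube)
  have "x*y^2 \<le> b*b^2" using assms b0 by (intro mult_mono power_mono) auto
  then have 3: "x*y^2 \<le> b^3" by (simp add: power2_eq_square power3_eq_cube)
  have "0 \<le> x^3 + x^2*y + x*y^2 + y^3" using assms by simp
  then have "\<bar>x^3 + x^2*y + x*y^2 + y^3\<bar> \<le> 4 * b^3" using 1 2 3 4 by linarith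
  then show ?thesis unfolding e abs_mult
    by (metis abs_ge_zero mult.commute mult_right_mono)
qed

lemma coalbedo_alt:
  assumes "Tm < Tp"
  shows "coalbedo Tm Tp bm bp x = bm + (bp - bm) * max 0 (min 1 ((x - Tm) / (Tp - Tm)))"
proof -
  have d: "Tp - Tm > 0" using assms by simp
  consider "x \<le> Tm" | "Tm < x" "x \<le> Tp" | "Tp < x" by linarith
  then show ?thesis
  proof cases
    case 1
    then have "(x - Tm) / (Tp - Tm) \<le> 0" using d by (simp add: divide_le_0_iff)
    then show ?thesis using 1 by (simp add: coalbedo_def)
  next
    case 2
    then have "(x - Tm) / (Tp - Tm) \<le> 1" "0 \<le> (x - Tm) / (Tp - Tm)" using d by simp_all
    then show ?thesis using 2 by (simp add: coalbedo_def)
  next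
    case 3
    then have "(x - Tm) / (Tp - Tm) \<ge> 1" using d by simp
    then show ?thesis using 3 assms by (simp add: coalbedo_def)
  qed
qed

lemma coalbedo_lip:
  assumes "Tm < Tp" "bm < bp"
  shows "\<bar>coalbedo Tm Tp bm bp x - coalbedo Tm Tp bm bp y\<bar> \<le> (bp - bm) / (Tp - Tm) * \<bar>x - y\<bar>"
proof -
  have "\<bar>coalbedo Tm Tp bm bp x - coalbedo Tm Tp bm bp y\<bar>
     = (bp - bm) * \<bar>max 0 (min 1 ((x - Tm) / (Tp - Tm))) - max 0 (min 1 ((y - Tm) / (Tp - Tm)))\<bar>"
    using assms by (simp add: coalbedo_alt abs_mult flip: right_diff_distrib)
  also have "\<dots> \<le> (bp - bm) * \<bar>(x - Tm) / (Tp - Tm) - (y - Tm) / (Tp - Tm)\<bar>"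
    using assms by (intro mult_left_mono clamp_lip) auto
  also have "\<dots> = (bp - bm) / (Tp - Tm) * \<bar>x - y\<bar>"
    using assms by (simp add: diff_divide_distrib[symmetric] abs_divide)
  finally show ?thesis .
qed

lemma coalbedo_bounds:
  assumes "Tm < Tp" "bm < bp"
  shows "bm \<le> coalbedo Tm Tp bm bp x" "coalbedo Tm Tp bm bp x \<le> bp"
proof -
  define t where "t = max 0 (min 1 ((x - Tm) / (Tp - Tm)))"
  have t: "0 \<le> t" "t \<le> 1" by (auto simp: t_def)
  have "coalbedo Tm Tp bm bp x = bm + (bp - bm) * t" using assms by (simp add: coalbedo_alt t_def)
  moreover have "0 \<le> (bp - bm) * t" "(bp - bm) * t \<le> (bp - bm)" using t assms
    by (auto intro: mult_left_le)
  ultimately show "bm \<le> coalbedo Tm Tp bm bp x" "coalbedo Tm Tp bm bp x \<le> bp" by linarith+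
qed

lemma coalbedo_cont:
  assumes "Tm < Tp" "bm < bp"
  shows "continuous_on UNIV (coalbedo Tm Tp bm bp)"
proof -
  have "coalbedo Tm Tp bm bp = (\<lambda>x. bm + (bp - bm) * max 0 (min 1 ((x - Tm) / (Tp - Tm))))"
    using assms by (intro ext coalbedo_alt)
  then show ?thesis using assms by (auto intro!: continuous_intros)
qed

lemma deriv_lower:
  fixes f f' :: "real \<Rightarrow> real"
  assumes "a \<le> b" "\<And>x. x \<in> {a..b} \<Longrightarrow> (f has_real_derivative f' x) (at x within {a..b})"
    "\<And>x. x \<in> {a..b} \<Longrightarrow> m \<le> f' x"
  shows "m * (b - a) \<le> f b - f a"
proof -
  obtain x where x: "x \<in> {a..b}" "f b - f a = f' x * (b - a)"
    using mvt_very_simple[of a b f "\<lambda>x. (*) (f' x)"] assms(1,2)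
    by (auto simp: has_field_derivative_def)
  then show ?thesis using assms(3)[OF x(1)] assms(1) by (simp add: mult_right_mono)
qed

lemma deriv_upper:
  fixes f f' :: "real \<Rightarrow> real"
  assumes "a \<le> b" "\<And>x. x \<in> {a..b} \<Longrightarrow> (f has_real_derivative f' x) (at x within {a..b})"
    "\<And>x. x \<in> {a..b} \<Longrightarrow> f' x \<le> m"
  shows "f b - f a \<le> m * (b - a)"
proof -
  have "(-m) * (b - a) \<le> (- f b) - (- f a)"
    by (rule deriv_lower[of a b "\<lambda>x. - f x" "\<lambda>x. - f' x"]) (use assms in \<open>auto intro: DERIV_minus\<close>)
  then show ?thesis by simp
qed

lemma abs3: "(0::real) \<le> \<alpha> \<Longrightarrow> 0 \<le> \<beta> \<Longrightarrow> 0 \<le> \<gamma> \<Longrightarrow> \<bar>\<alpha>*a + \<beta>*b - \<gamma>*c\<bar> \<le> \<alpha>*\<bar>a\<bar> + \<beta>*\<bar>b\<bar> + \<gamma>*\<bar>c\<bar>"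
proof -
  assume h: "0 \<le> \<alpha>" "0 \<le> \<beta>" "0 \<le> \<gamma>"
  have "\<bar>\<alpha>*a\<bar> = \<alpha>*\<bar>a\<bar>" "\<bar>\<beta>*b\<bar> = \<beta>*\<bar>b\<bar>" "\<bar>\<gamma>*c\<bar> = \<gamma>*\<bar>c\<bar>" using h by (simp_all add: abs_mult)
  moreover have "\<bar>\<alpha>*a + \<beta>*b - \<gamma>*c\<bar> \<le> \<bar>\<alpha>*a\<bar> + \<bar>\<beta>*b\<bar> + \<bar>\<gamma>*c\<bar>" by linarith
  ultimately show ?thesis by simp
qed

lemma cube4: "x^3 * x = x^4" for x :: real
  by (simp add: power4_eq_xxxx power3_eq_cube)
lemma fa_pos: "0 \<le> a \<Longrightarrow> 0 \<le> b \<Longrightarrow> fa ga sB ea a b = (ea * sB * b^4 - 2 * ea * sB * a^4) / ga"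
  unfolding fa_def by (simp add: mult.assoc cube4)
lemma fs_pos: "0 \<le> a \<Longrightarrow> 0 \<le> b \<Longrightarrow> fs gs sB ea q beta a b = (- sB * b^4 + ea * sB * a^4 + q * beta b) / gs"
  unfolding fs_def by (simp add: mult.assoc cube4)



theorem lemma5p1:
  fixes ga gs sB q ea Tm Tp bm bp T1 T2 T3 :: real
  defines "beta \<equiv> coalbedo Tm Tp bm bp"
  assumes ga: "ga > 0" and gs: "gs > 0" and sB: "sB > 0" and q: "q > 0"
    and ea: "0 < ea" "ea < 2"
    and Tpm: "0 < Tm" "Tm < Tp" and bpm: "0 < bm" "bm < bp"
    and three: "{T. T > 0 \<and> sB * (1 - ea / 2) * T^4 = q * beta T} = {T1, T2, T3}"
    and T1: "0 < T1" "T1 < Tm" and T2: "Tm < T2" "T2 < Tp" and T3: "Tp < T3"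
    and one: "\<exists>!T. T > 0 \<and> sB * T^4 = q * beta T"
    and p: "p \<in> frontier (Q4 sB ea q beta) \<inter> Qquad"
    and noneq: "\<not> (fa ga sB ea (fst p) (snd p) = 0 \<and> fs gs sB ea q beta (fst p) (snd p) = 0)"
  shows "\<exists>\<tau> > 0. \<exists>Ta Ts :: real \<Rightarrow> real.
           Ta 0 = fst p \<and> Ts 0 = snd p \<and>
           (\<forall>t \<in> {-\<tau>..0}.
              (Ta has_real_derivative fa ga sB ea (Ta t) (Ts t)) (at t within {-\<tau>..0}) \<and>
              (Ts has_real_derivative fs gs sB ea q beta (Ta t) (Ts t)) (at t within {-\<tau>..0})) \<and>
           Ts (-\<tau>) = 0 \<and> Ta (-\<tau>) > 0"
proof -
  define u0 v0 where "u0 = fst p" and "v0 = snd p"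
  define W where "W a b = ea * sB * a^4 + q * beta b - sB * b^4" for a b
  define K where "K = (bp - bm) / (Tp - Tm)"
  have K: "K > 0" using Tpm bpm by (simp add: K_def)
  have bcont: "continuous_on UNIV beta" unfolding beta_def using coalbedo_cont Tpm bpm by blast
  have bb: "bm \<le> beta x" "beta x \<le> bp" for x unfolding beta_def using coalbedo_bounds Tpm bpm by auto
  have blip: "\<bar>beta x - beta y\<bar> \<le> K * \<bar>x - y\<bar>" for x y
    unfolding beta_def K_def using coalbedo_lip Tpm bpm by blast
  have bcomp: "continuous_on S (\<lambda>s. beta (f s))" if "continuous_on S f" for S and f :: "real \<Rightarrow> real"
    by (rule continuous_on_compose2[OF bcont that]) auto
  have bcomp2: "continuous_on S (\<lambda>s. beta (f s))" if "continuous_on S f" for S and f :: "real \<times> real \<Rightarrow> real"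
    by (rule continuous_on_compose2[OF bcont that]) auto
  have u0: "u0 > 0" and v0: "v0 > 0" using p by (auto simp: Qquad_def u0_def v0_def)
  have "p \<in> closure (Q4 sB ea q beta)" using p by (auto simp: frontier_def)
  moreover have "Q4 sB ea q beta \<subseteq> {z. snd z \<le> root 4 2 * fst z} \<inter> {z. 0 \<le> W (fst z) (snd z)}"
    by (auto simp: Q4_def W_def)
  moreover have "closed ({z. snd z \<le> root 4 2 * fst z} \<inter> {z. 0 \<le> W (fst z) (snd z)})"
    unfolding W_def
    by (intro closed_Int closed_Collect_le continuous_intros bcomp2)
  ultimately have "p \<in> {z. snd z \<le> root 4 2 * fst z} \<inter> {z. 0 \<le> W (fst z) (snd z)}"
    by (meson closure_minimal subsetD)
  then have pr: "v0 \<le> root 4 2 * u0" and W0: "0 \<le> W u0 v0" by (auto simp: u0_def v0_def)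
  have v04: "v0^4 \<le> 2 * u0^4"
  proof -
    have "v0^4 \<le> (root 4 2 * u0)^4" using pr v0 by (intro power_mono) auto
    also have "\<dots> = 2 * u0^4" by (simp add: power_mult_distrib)
    finally show ?thesis .
  qed
  have ne: "\<not> (v0^4 = 2 * u0^4 \<and> W u0 v0 = 0)"
  proof
    assume h: "v0^4 = 2 * u0^4 \<and> W u0 v0 = 0"
    have "\<bar>v0\<bar>^3 * v0 = v0^4" "\<bar>u0\<bar>^3 * u0 = u0^4" using u0 v0 by (simp_all add: power_Suc2 power3_eq_cube power4_eq_xxxx)
    then have "fa ga sB ea (fst p) (snd p) = 0 \<and> fs gs sB ea q beta (fst p) (snd p) = 0"
      using h unfolding fa_def fs_def W_def u0_def[symmetric] v0_def[symmetric]
      by (simp add: algebra_simps)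
    with noneq show False by blast
  qed
  define aF where "aF v = ea * sB * (2 * u0^4 - v^4)/ga" for v
  define bF where "bF v = max (ea * sB * u0^4 + q * beta v - sB * v^4) 0 / gs" for v
  have abpos: "aF v + bF v > 0" if v: "v \<in> {0..v0}" for v
  proof (cases "v < v0")
    case True
    have "v^4 < v0^4" using v True by (intro power_strict_mono) auto
    then have "aF v > 0" using v04 ea sB ga by (simp add: aF_def)
    moreover have "bF v \<ge> 0" using gs by (simp add: bF_def)
    ultimately show ?thesis by linarith
  next
    case False
    then have vv: "v = v0" using v by auto
    have "aF v0 \<ge> 0" using v04 ea sB ga by (simp add: aF_def)
    moreover have "bF v0 = W u0 v0 / gs" using W0 by (simp add: bF_def W_def)
    moreover have "aF v0 = 0 \<Longrightarrow> v0^4 = 2 * u0^4" using ea sB ga by (simp add: aF_def)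
    ultimately have a0: "aF v0 \<ge> 0" and bw: "bF v0 = W u0 v0 / gs" and az: "aF v0 = 0 \<Longrightarrow> v0^4 = 2 * u0^4"
      by blast+
    have b0: "bF v0 \<ge> 0" using W0 gs bw by simp
    show ?thesis
    proof (rule ccontr)
      assume "\<not> ?thesis"
      then have "aF v0 = 0" "bF v0 = 0" using a0 b0 vv by auto
      then have "v0^4 = 2 * u0^4" "W u0 v0 = 0" using az bw gs by auto
      then show False using ne by blast
    qed
  qed
  have abcont: "continuous_on {0..v0} (\<lambda>v. aF v + bF v)"
    unfolding aF_def bF_def by (intro continuous_intros bcomp) (use gs ga in auto)
  obtain vm where vm: "vm \<in> {0..v0}" "\<And>v. v \<in> {0..v0} \<Longrightarrow> aF vm + bF vm \<le> aF v + bF v"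
    using continuous_attains_inf[OF compact_Icc _ abcont] v0 by auto
  define m where "m = aF vm + bF vm"
  have m: "m > 0" using abpos[OF vm(1)] by (simp add: m_def)
  have mle: "m \<le> aF v + bF v" if "v \<in> {0..v0}" for v using vm(2)[OF that] by (simp add: m_def)
  define U where "U = v0 * (1 + 1/ea)"
  have U0: "U \<ge> v0" using v0 ea by (simp add: U_def field_simps)
  have U1: "U \<ge> v0 / ea" using v0 ea by (simp add: U_def field_simps)
  have eU: "ea * U^4 \<ge> v0^4"
  proof -
    have "v0^3 * (v0/ea) \<le> U^3 * U" using U0 U1 v0 ea by (intro mult_mono power_mono) auto
    then have "v0^4 / ea \<le> U^4" by (simp add: power_Suc2 power3_eq_cube power4_eq_xxxx)
    then show ?thesis using ea by (simp add: field_simps)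
  qed
  define s1 where "s1 = (U + v0) / m"
  define T where "T = s1 + gs * v0 / (q * bm) + 1"
  define k where "k = ga / (4 * gs)"
  define C where "C = sB * v0^4 / gs"
  define A where "A = max U ((v0 + k * u0 + C * T) / k)"
  have s1: "s1 > 0" using U0 v0 m by (simp add: s1_def)
  have gq: "gs * v0 / (q * bm) > 0" using gs v0 q bpm by (intro divide_pos_pos mult_pos_pos) auto
  have T: "T > 0" "T \<ge> s1" using s1 gq by (simp_all add: T_def)
  have k: "k > 0" using ga gs by (simp add: k_def)
  have C: "C \<ge> 0" using sB gs v0 by (simp add: C_def)
  have AU: "A \<ge> U" by (simp add: A_def)
  have Au0: "A \<ge> u0"
  proof -
    have "u0 \<le> (v0 + k * u0 + C * T) / k" using k v0 C T by (simp add: field_simps)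
    then show ?thesis by (simp add: A_def)
  qed
  have Ab: "(v0 + k * u0 + C * T) / k \<le> A" by (simp add: A_def)
  define cu where "cu x = max u0 (min A x)" for x
  define cv where "cv y = max 0 (min v0 y)" for y
  have cu: "u0 \<le> cu x" "cu x \<le> A" for x using Au0 by (auto simp: cu_def)
  have cv: "0 \<le> cv y" "cv y \<le> v0" for y using v0 by (auto simp: cv_def)
  define g1 where "g1 x y = ea * sB * (2 * (cu x)^4 - (cv y)^4)/ga" for x y
  define g2 where "g2 x y = - max (W (cu x) (cv y)) 0 / gs" for x y
  define G where "G z = (g1 (fst z) (snd z), g2 (fst z) (snd z))" for z
  define M where "M = ea * sB/ga * (8 * A^3+4 * v0^3) + (ea * sB * 4 * A^3 + q * K + 4 * sB * v0^3)/gs"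
  have cul: "\<bar>(cu x)^4 - (cu x')^4\<bar> \<le> 4 * A^3*\<bar>x - x'\<bar>" for x x'
  proof -
    have "\<bar>(cu x)^4 - (cu x')^4\<bar> \<le> 4 * A^3*\<bar>cu x - cu x'\<bar>"
      using cu[of x] cu[of x'] u0 by (intro pow4_lip) auto
    also have "\<dots> \<le> 4 * A^3*\<bar>x - x'\<bar>"
      unfolding cu_def using Au0 u0 by (intro mult_left_mono clamp_lip) auto
    finally show ?thesis .
  qed
  have cvl: "\<bar>(cv y)^4 - (cv y')^4\<bar> \<le> 4 * v0^3*\<bar>y - y'\<bar>" for y y'
  proof -
    have "\<bar>(cv y)^4 - (cv y')^4\<bar> \<le> 4 * v0^3*\<bar>cv y - cv y'\<bar>"
      using cv[of y] cv[of y'] by (intro pow4_lip) auto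
    also have "\<dots> \<le> 4 * v0^3*\<bar>y - y'\<bar>"
      unfolding cv_def using v0 by (intro mult_left_mono clamp_lip) auto
    finally show ?thesis .
  qed
  have cvl1: "\<bar>cv y - cv y'\<bar> \<le> \<bar>y - y'\<bar>" for y y' unfolding cv_def using v0 by (intro clamp_lip) auto
  have M0: "M \<ge> 0" using ea sB ga gs q K Au0 u0 v0 unfolding M_def by (intro add_nonneg_nonneg divide_nonneg_nonneg mult_nonneg_nonneg) auto
  have g1l: "\<bar>g1 x y - g1 x' y'\<bar> \<le> M * (\<bar>x - x'\<bar> + \<bar>y - y'\<bar>)" for x y x' y'
  proof -
    define c1 where "c1 = ea * sB / ga"
    have c1: "c1 > 0" using ea sB ga by (simp add: c1_def)
    have e: "g1 x y - g1 x' y' = c1 * (2 * ((cu x)^4 - (cu x')^4) - ((cv y)^4 - (cv y')^4))"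
      using ga by (simp add: g1_def c1_def field_simps)
    have "\<bar>2 * ((cu x)^4 - (cu x')^4) - ((cv y)^4 - (cv y')^4)\<bar> \<le> 2 * (4 * A^3 * \<bar>x - x'\<bar>) + 4 * v0^3 * \<bar>y - y'\<bar>"
      using cul[of x x'] cvl[of y y'] by (smt (verit))
    also have "\<dots> \<le> (8 * A^3 + 4 * v0^3) * (\<bar>x - x'\<bar> + \<bar>y - y'\<bar>)"
      using Au0 u0 v0 by (simp add: algebra_simps)
    finally have "\<bar>g1 x y - g1 x' y'\<bar> \<le> c1 * ((8 * A^3 + 4 * v0^3) * (\<bar>x - x'\<bar> + \<bar>y - y'\<bar>))"
      unfolding e abs_mult using c1 by (simp add: mult_left_mono abs_of_pos)
    also have "\<dots> \<le> M * (\<bar>x - x'\<bar> + \<bar>y - y'\<bar>)"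
    proof -
      have "0 \<le> (ea * sB * 4 * A^3 + q * K + 4 * sB * v0^3) / gs"
        using ea sB gs q K Au0 u0 v0 by (intro divide_nonneg_nonneg add_nonneg_nonneg mult_nonneg_nonneg) auto
      then have "c1 * (8 * A^3 + 4 * v0^3) \<le> M" unfolding M_def c1_def by simp
      then have "(c1 * (8 * A^3 + 4 * v0^3)) * (\<bar>x - x'\<bar> + \<bar>y - y'\<bar>) \<le> M * (\<bar>x - x'\<bar> + \<bar>y - y'\<bar>)"
        by (intro mult_right_mono) auto
      then show ?thesis by (simp add: mult.assoc)
    qed
    finally show ?thesis by (simp add: mult.assoc)
  qed
  have g2l: "\<bar>g2 x y - g2 x' y'\<bar> \<le> M * (\<bar>x - x'\<bar> + \<bar>y - y'\<bar>)" for x y x' y'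
  proof -
    define P2 where "P2 = ea * sB * 4 * A^3 + q * K + 4 * sB * v0^3"
    have "\<bar>W (cu x) (cv y) - W (cu x') (cv y')\<bar>
        \<le> ea * sB * \<bar>(cu x)^4 - (cu x')^4\<bar> + q * \<bar>beta (cv y) - beta (cv y')\<bar> + sB * \<bar>(cv y)^4 - (cv y')^4\<bar>"
    proof -
      have "W (cu x) (cv y) - W (cu x') (cv y') = ea * sB * ((cu x)^4 - (cu x')^4) + q * (beta (cv y) - beta (cv y')) - sB * ((cv y)^4 - (cv y')^4)"
        by (simp add: W_def algebra_simps)
      then show ?thesis using abs3[of "ea * sB" q sB "(cu x)^4 - (cu x')^4" "beta (cv y) - beta (cv y')" "(cv y)^4 - (cv y')^4"] ea sB q by simp
    qed
    also have "\<dots> \<le> ea * sB * (4 * A^3 * \<bar>x - x'\<bar>) + q * (K * \<bar>y - y'\<bar>) + sB * (4 * v0^3 * \<bar>y - y'\<bar>)"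
    proof -
      have "\<bar>beta (cv y) - beta (cv y')\<bar> \<le> K * \<bar>y - y'\<bar>"
        using blip[of "cv y" "cv y'"] cvl1[of y y'] K by (meson mult_left_mono order_trans less_imp_le)
      then show ?thesis using cul[of x x'] cvl[of y y'] ea sB q
        by (intro add_mono mult_left_mono) auto
    qed
    also have "\<dots> \<le> P2 * (\<bar>x - x'\<bar> + \<bar>y - y'\<bar>)"
      using ea sB q K Au0 u0 v0 unfolding P2_def by (simp add: algebra_simps)
    finally have hW: "\<bar>W (cu x) (cv y) - W (cu x') (cv y')\<bar> \<le> P2 * (\<bar>x - x'\<bar> + \<bar>y - y'\<bar>)" .
    have "\<bar>g2 x y - g2 x' y'\<bar> = \<bar>max (W (cu x) (cv y)) 0 - max (W (cu x') (cv y')) 0\<bar> / gs"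
      using gs by (simp add: g2_def field_simps abs_divide)
    also have "\<dots> \<le> \<bar>W (cu x) (cv y) - W (cu x') (cv y')\<bar> / gs"
      using gs by (intro divide_right_mono) (auto simp: max_def abs_if)
    also have "\<dots> \<le> P2 * (\<bar>x - x'\<bar> + \<bar>y - y'\<bar>) / gs"
      using gs hW by (intro divide_right_mono) auto
    also have "\<dots> \<le> M * (\<bar>x - x'\<bar> + \<bar>y - y'\<bar>)"
    proof -
      have "0 \<le> ea * sB / ga * (8 * A^3 + 4 * v0^3)"
        using ea sB ga Au0 u0 v0 by (intro mult_nonneg_nonneg divide_nonneg_nonneg add_nonneg_nonneg) auto
      then have "P2 / gs \<le> M" unfolding M_def P2_def by simp
      then show ?thesis by (metis abs_ge_zero add_nonneg_nonneg mult_right_mono times_divide_eq_left)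
    qed
    finally show ?thesis .
  qed
  have Glip: "norm (G z - G z') \<le> (4 * M+1) * norm (z - z')" for z z'
  proof -
    obtain x y x' y' where zz: "z = (x,y)" "z' = (x',y')" by fastforce
    have n1: "\<bar>x - x'\<bar> \<le> norm (z - z')" "\<bar>y - y'\<bar> \<le> norm (z - z')"
      using norm_fst_le[of "x - x'" "y - y'"] norm_snd_le[of "y - y'" "x - x'"] by (auto simp: zz)
    have "norm (G z - G z') \<le> \<bar>g1 x y - g1 x' y'\<bar> + \<bar>g2 x y - g2 x' y'\<bar>"
      using norm_Pair_le[of "g1 x y - g1 x' y'" "g2 x y - g2 x' y'"] by (simp add: G_def zz)
    also have "\<dots> \<le> 2 * M * (\<bar>x - x'\<bar> + \<bar>y - y'\<bar>)" using g1l[of x y x' y'] g2l[of x y x' y'] by linarith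
    also have "\<dots> \<le> 2 * M * (2 * norm (z - z'))" using n1 M0 by (intro mult_left_mono) auto
    also have "\<dots> \<le> (4 * M+1) * norm (z - z')" by (simp add: algebra_simps)
    finally show ?thesis .
  qed
  obtain Y where Y0: "Y 0 = p" and dY: "\<And>s. s \<in> {0..T} \<Longrightarrow> (Y has_vector_derivative G (Y s)) (at s within {0..T})"
    using ode_exists[of "4 * M+1" G T p] Glip M0 T by auto
  define y1 where "y1 s = fst (Y s)" for s
  define y2 where "y2 s = snd (Y s)" for s
  have GY: "G (Y s) = (g1 (y1 s) (y2 s), g2 (y1 s) (y2 s))" for s by (simp add: G_def y1_def y2_def)
  have d1: "(y1 has_real_derivative g1 (y1 s) (y2 s)) (at s within {0..T})" if s: "s \<in> {0..T}" for s
  proof -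
    have "((\<lambda>x. fst (Y x)) has_vector_derivative fst (G (Y s))) (at s within {0..T})"
      using has_derivative_fst[OF dY[OF s, unfolded has_vector_derivative_def]]
      unfolding has_vector_derivative_def by simp
    then show ?thesis by (simp add: has_real_derivative_iff_has_vector_derivative y1_def[abs_def] y2_def GY[unfolded y1_def y2_def])
  qed
  have d2: "(y2 has_real_derivative g2 (y1 s) (y2 s)) (at s within {0..T})" if s: "s \<in> {0..T}" for s
  proof -
    have "((\<lambda>x. snd (Y x)) has_vector_derivative snd (G (Y s))) (at s within {0..T})"
      using has_derivative_snd[OF dY[OF s, unfolded has_vector_derivative_def]]
      unfolding has_vector_derivative_def by simp
    then show ?thesis by (simp add: has_real_derivative_iff_has_vector_derivative y2_def[abs_def] y1_def GY[unfolded y1_def y2_def])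
  qed
  have d1s: "(y1 has_real_derivative g1 (y1 s) (y2 s)) (at s within {a..b})"
    if "0 \<le> a" "b \<le> T" "s \<in> {a..b}" for a b s
    using that by (intro DERIV_subset[OF d1]) auto
  have d2s: "(y2 has_real_derivative g2 (y1 s) (y2 s)) (at s within {a..b})"
    if "0 \<le> a" "b \<le> T" "s \<in> {a..b}" for a b s
    using that by (intro DERIV_subset[OF d2]) auto
  have c1: "continuous_on {0..T} y1"
    using d1 DERIV_continuous continuous_on_eq_continuous_within by blast
  have c2: "continuous_on {0..T} y2"
    using d2 DERIV_continuous continuous_on_eq_continuous_within by blast
  have y10: "y1 0 = u0" and y20: "y2 0 = v0" using Y0 by (simp_all add: y1_def y2_def u0_def v0_def)
  have cu4: "u0^4 \<le> (cu x)^4" for x using cu[of x] u0 by (intro power_mono) auto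
  have cv4: "(cv y)^4 \<le> v0^4" for y using cv[of y] by (intro power_mono) auto
  have g1nn: "g1 x y \<ge> 0" for x y
  proof -
    have "(cv y)^4 \<le> 2 * (cu x)^4" using cu4[of x] cv4[of y] v04 by linarith
    then show ?thesis using ea sB ga by (simp add: g1_def)
  qed
  have g2np: "g2 x y \<le> 0" for x y using gs by (simp add: g2_def)
  have mono1: "y1 a \<le> y1 b" if "0 \<le> a" "a \<le> b" "b \<le> T" for a b
    using deriv_lower[of a b y1 "\<lambda>s. g1 (y1 s) (y2 s)" 0] that d1s g1nn by auto
  have mono2: "y2 b \<le> y2 a" if "0 \<le> a" "a \<le> b" "b \<le> T" for a b
    using deriv_upper[of a b y2 "\<lambda>s. g2 (y1 s) (y2 s)" 0] that d2s g2np by auto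
  define w where "w s = W (cu (y1 s)) (cv (y2 s))" for s
  have wcont: "continuous_on {0..T} w"
    unfolding w_def W_def cu_def cv_def by (intro continuous_intros bcomp c1 c2)
  have Wmono: "W (cu x) b \<le> W (cu x') b" if "x \<le> x'" for x x' b
  proof -
    have "cu x \<le> cu x'" using that by (simp add: cu_def max_def min_def)
    then have "(cu x)^4 \<le> (cu x')^4" using cu[of x] u0 by (intro power_mono) auto
    then show ?thesis using ea sB by (simp add: W_def)
  qed
  have cuid: "cu x = x" if "u0 \<le> x" "x \<le> A" for x using that by (simp add: cu_def)
  have cvid: "cv y = y" if "0 \<le> y" "y \<le> v0" for y using that by (simp add: cv_def)
  have winv: "w r \<ge> 0" if r: "r \<in> {0..T}" for r
  proof (rule ccontr)
    assume wr: "\<not> 0 \<le> w r"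
    define S where "S = {0..r} \<inter> w -` {0..}"
    have clS: "closed S" unfolding S_def
      by (rule continuous_closed_preimage[OF continuous_on_subset[OF wcont]]) (use r in auto)
    have w0: "w 0 = W u0 v0" using Au0 u0 v0 by (simp add: w_def y10 y20 cuid cvid)
    have "0 \<in> S" using w0 W0 r by (simp add: S_def)
    moreover have bS: "bdd_above S" by (auto simp: S_def bdd_above_def)
    ultimately have s0S: "Sup S \<in> S" using closed_contains_Sup[OF _ _ clS] by blast
    define s0 where "s0 = Sup S"
    have up: "\<sigma> \<le> s0" if "\<sigma> \<in> S" for \<sigma> using cSup_upper[OF that bS] by (simp add: s0_def)
    have s0: "0 \<le> s0" "s0 \<le> r" "w s0 \<ge> 0" using s0S by (auto simp: S_def s0_def)
    obtain \<sigma> where \<sigma>: "s0 \<le> \<sigma>" "\<sigma> \<le> r" "w \<sigma> = 0"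
      using IVT2'[of w r 0 s0] s0 wr continuous_on_subset[OF wcont, of "{s0..r}"] r by auto
    then have "\<sigma> \<in> S" using s0 by (simp add: S_def)
    then have "\<sigma> = s0" using up \<sigma> by force
    then have ws0: "w s0 = 0" using \<sigma> by simp
    have wle: "w x \<le> 0" if "x \<in> {s0..r}" for x
    proof (rule ccontr)
      assume "\<not> w x \<le> 0"
      then have "x \<in> S" using that s0 by (simp add: S_def)
      then have "x \<le> s0" by (rule up)
      then show False using that ws0 \<open>\<not> w x \<le> 0\<close> by force
    qed
    have g20: "g2 (y1 x) (y2 x) = 0" if "x \<in> {s0..r}" for x using wle[OF that] by (simp add: g2_def w_def)
    have dd: "\<And>x. x \<in> {s0..r} \<Longrightarrow> (y2 has_real_derivative g2 (y1 x) (y2 x)) (at x within {s0..r})"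
      using s0 r by (intro d2s) auto
    have nn: "\<And>x. x \<in> {s0..r} \<Longrightarrow> 0 \<le> g2 (y1 x) (y2 x)" using g20 by simp
    have "0 * (r - s0) \<le> y2 r - y2 s0"
      by (rule deriv_lower[OF _ dd nn]) (use s0 in simp)
    then have "y2 r = y2 s0" using mono2[of s0 r] s0 r by auto
    moreover have "y1 s0 \<le> y1 r" using mono1[of s0 r] s0 r by auto
    ultimately have "w s0 \<le> w r" unfolding w_def using Wmono by metis
    then show False using ws0 wr by simp
  qed
  have gl: "m \<le> g1 x y - g2 x y" for x y
  proof -
    have "aF (cv y) \<le> g1 x y" using cu4[of x] ea sB ga
      by (simp add: aF_def g1_def divide_right_mono)
    moreover have "bF (cv y) \<le> - g2 x y"
    proof -
      have "ea * sB * u0^4 \<le> ea * sB * (cu x)^4" using cu4[of x] ea sB by simp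
      then have "ea * sB * u0^4 + q * beta (cv y) - sB * (cv y)^4 \<le> W (cu x) (cv y)" by (simp add: W_def)
      then show ?thesis using gs by (simp add: bF_def g2_def divide_right_mono)
    qed
    moreover have "m \<le> aF (cv y) + bF (cv y)" using mle cv[of y] by simp
    ultimately show ?thesis by linarith
  qed
  have Elow: "m * s \<le> (y1 s - y2 s) - (u0 - v0)" if s: "s \<in> {0..T}" for s
  proof -
    have "m * (s - 0) \<le> (y1 s - y2 s) - (y1 0 - y2 0)"
      by (rule deriv_lower[of 0 s "\<lambda>t. y1 t - y2 t" "\<lambda>t. g1 (y1 t) (y2 t) - g2 (y1 t) (y2 t)"])
        (use s gl in \<open>auto intro!: DERIV_diff d1s d2s\<close>)
    then show ?thesis by (simp add: y10 y20)
  qed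
  have phil: "g2 x y + k * g1 x y \<le> C" for x y
  proof -
    define X where "X = (cu x)^4"
    define Yv where "Yv = (cv y)^4"
    have kg: "k * g1 x y = (ea * sB * (2 * X - Yv) / 4) / gs"
      using ga gs by (simp add: k_def g1_def X_def Yv_def field_simps)
    have g2le: "g2 x y \<le> - W (cu x) (cv y) / gs" using gs by (simp add: g2_def divide_right_mono)
    have "0 \<le> ea * sB * X" "0 \<le> q * beta (cv y)" "0 \<le> ea * sB * Yv" "sB * Yv \<le> sB * v0^4"
      using ea sB q bb[of "cv y"] bpm cv4[of y] by (auto simp: X_def Yv_def)
    then have "- W (cu x) (cv y) + ea * sB * (2 * X - Yv) / 4 \<le> sB * v0^4"
    proof -
      have e1: "ea * sB * (2 * X - Yv) / 4 = (ea * sB * X) / 2 - (ea * sB * Yv) / 4" by (simp add: field_simps)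
      have e2: "W (cu x) (cv y) = ea * sB * X + q * beta (cv y) - sB * Yv" by (simp add: W_def X_def Yv_def)
      show ?thesis unfolding e1 e2 using \<open>0 \<le> ea * sB * X\<close> \<open>0 \<le> q * beta (cv y)\<close> \<open>0 \<le> ea * sB * Yv\<close> \<open>sB * Yv \<le> sB * v0^4\<close> by linarith
    qed
    then have "(- W (cu x) (cv y) + ea * sB * (2 * X - Yv) / 4) / gs \<le> C"
      using gs by (simp add: C_def divide_right_mono)
    then show ?thesis using g2le kg by (simp add: add_divide_distrib[symmetric] diff_divide_distrib)
  qed
  have Phi: "(y2 s + k * y1 s) - (v0 + k * u0) \<le> C * s" if s: "s \<in> {0..T}" for s
  proof -
    have "(y2 s + k * y1 s) - (y2 0 + k * y1 0) \<le> C * (s - 0)"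
      by (rule deriv_upper[of 0 s "\<lambda>t. y2 t + k * y1 t" "\<lambda>t. g2 (y1 t) (y2 t) + k * g1 (y1 t) (y2 t)"])
        (use s phil in \<open>auto intro!: DERIV_add DERIV_cmult d1s d2s\<close>)
    then show ?thesis by (simp add: y10 y20)
  qed
  have yT: "y2 T \<le> 0"
  proof (rule ccontr)
    assume "\<not> y2 T \<le> 0"
    then have pos: "y2 s > 0" if "s \<in> {0..T}" for s using mono2[of s T] that by auto
    have ms1: "m * s1 = U + v0" using m by (simp add: s1_def)
    have g2b: "g2 (y1 s) (y2 s) \<le> - (q * bm / gs)" if s: "s \<in> {s1..T}" for s
    proof -
      have s': "s \<in> {0..T}" using s s1 by auto
      have "m * s1 \<le> m * s" using s m by (intro mult_left_mono) auto
      then have "U \<le> y1 s" using Elow[OF s'] pos[OF s'] ms1 u0 by linarith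
      then have "U \<le> cu (y1 s)" using AU by (simp add: cu_def)
      then have "U^4 \<le> (cu (y1 s))^4" using U0 v0 by (intro power_mono) auto
      then have "ea * U^4 \<le> ea * (cu (y1 s))^4" using ea by (intro mult_left_mono) auto
      then have "v0^4 \<le> ea * (cu (y1 s))^4" using eU by linarith
      then have "sB * v0^4 \<le> sB * (ea * (cu (y1 s))^4)" using sB by (intro mult_left_mono) auto
      then have "sB * v0^4 \<le> ea * sB * (cu (y1 s))^4" by (simp add: algebra_simps)
      moreover have "sB * (cv (y2 s))^4 \<le> sB * v0^4" using cv4 sB by simp
      moreover have "q * bm \<le> q * beta (cv (y2 s))" using bb q by simp
      ultimately have "q * bm \<le> W (cu (y1 s)) (cv (y2 s))" by (simp add: W_def)
      then show ?thesis using gs q bpm by (simp add: g2_def divide_right_mono)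
    qed
    have "y2 T - y2 s1 \<le> - (q * bm / gs) * (T - s1)"
      by (rule deriv_upper[of s1 T y2 "\<lambda>t. g2 (y1 t) (y2 t)"]) (use T s1 g2b d2s in auto)
    moreover have "y2 s1 \<le> v0" using mono2[of 0 s1] T s1 y20 by auto
    moreover have "(q * bm / gs) * (T - s1) = v0 + q * bm / gs"
      using gs q bpm by (simp add: T_def field_simps)
    moreover have "q * bm / gs > 0" using gs q bpm by simp
    ultimately show False using pos[of T] T by auto
  qed
  obtain ss where ss: "0 \<le> ss" "ss \<le> T" "y2 ss = 0"
    using IVT2'[of y2 T 0 0] yT y20 v0 T c2 by auto
  have ss0: "ss > 0" using ss y20 v0 by (cases "ss = 0") auto
  have onI: "u0 \<le> y1 t \<and> y1 t \<le> A \<and> 0 \<le> y2 t \<and> y2 t \<le> v0" if t: "t \<in> {0..ss}" for t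
  proof -
    have a: "0 \<le> y2 t" using mono2[of t ss] t ss by auto
    have b: "y2 t \<le> v0" using mono2[of 0 t] t ss y20 by auto
    have c: "u0 \<le> y1 t" using mono1[of 0 t] t ss y10 by auto
    have "k * y1 t \<le> v0 + k * u0 + C * t" using Phi[of t] t ss a by auto
    also have "\<dots> \<le> v0 + k * u0 + C * T" using C t ss by (auto intro: mult_left_mono)
    finally have "y1 t \<le> (v0 + k * u0 + C * T) / k" using k by (simp add: field_simps)
    then show ?thesis using a b c Ab by auto
  qed
  have fa_eq: "fa ga sB ea (y1 t) (y2 t) = - g1 (y1 t) (y2 t)" if t: "t \<in> {0..ss}" for t
  proof -
    have h: "u0 \<le> y1 t" "y1 t \<le> A" "0 \<le> y2 t" "y2 t \<le> v0" using onI[OF t] by auto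
    have "fa ga sB ea (y1 t) (y2 t) = (ea * sB * (y2 t)^4 - 2 * ea * sB * (y1 t)^4) / ga"
      using h u0 by (intro fa_pos) auto
    also have "\<dots> = - (ea * sB * (2 * (y1 t)^4 - (y2 t)^4) / ga)"
      using ga by (simp add: field_simps)
    also have "\<dots> = - g1 (y1 t) (y2 t)" using h by (simp add: g1_def cuid cvid)
    finally show ?thesis .
  qed
  have fs_eq: "fs gs sB ea q beta (y1 t) (y2 t) = - g2 (y1 t) (y2 t)" if t: "t \<in> {0..ss}" for t
  proof -
    have h: "u0 \<le> y1 t" "y1 t \<le> A" "0 \<le> y2 t" "y2 t \<le> v0" using onI[OF t] by auto
    have "fs gs sB ea q beta (y1 t) (y2 t) = (- sB * (y2 t)^4 + ea * sB * (y1 t)^4 + q * beta (y2 t)) / gs"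
      using h u0 by (intro fs_pos) auto
    also have "\<dots> = W (y1 t) (y2 t) / gs" by (simp add: W_def algebra_simps)
    also have "\<dots> = w t / gs" using h by (simp add: w_def cuid cvid)
    also have "\<dots> = - g2 (y1 t) (y2 t)" using winv[of t] t ss by (simp add: g2_def w_def)
    finally show ?thesis .
  qed
  define Ta where "Ta t = y1 (- t)" for t
  define Ts where "Ts t = y2 (- t)" for t
  have r1: "Ta 0 = fst p" "Ts 0 = snd p" using y10 y20 by (simp_all add: Ta_def Ts_def u0_def v0_def)
  have r3: "Ts (- ss) = 0" "Ta (- ss) > 0" using onI[of ss] ss0 ss u0 by (auto simp: Ta_def Ts_def)
  have r2: "(Ta has_real_derivative fa ga sB ea (Ta t) (Ts t)) (at t within {- ss..0}) \<and>
            (Ts has_real_derivative fs gs sB ea q beta (Ta t) (Ts t)) (at t within {- ss..0})"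
    if t: "t \<in> {- ss..0}" for t
  proof
    have mt: "- t \<in> {0..ss}" using t by auto
    have um: "(uminus has_real_derivative -1) (at t within {- ss..0})"
      by (intro derivative_eq_intros) auto
    have im: "uminus ` {- ss..0} = {0..ss}" by simp
    have e1: "(y1 has_real_derivative g1 (y1 (- t)) (y2 (- t))) (at (- t) within uminus ` {- ss..0})"
      unfolding im by (rule d1s) (use mt ss in auto)
    have e2: "(y2 has_real_derivative g2 (y1 (- t)) (y2 (- t))) (at (- t) within uminus ` {- ss..0})"
      unfolding im by (rule d2s) (use mt ss in auto)
    have TaE: "Ta = y1 \<circ> uminus" "Ts = y2 \<circ> uminus" by (auto simp: Ta_def Ts_def fun_eq_iff)
    show "(Ta has_real_derivative fa ga sB ea (Ta t) (Ts t)) (at t within {- ss..0})"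
      using DERIV_image_chain[OF e1 um] fa_eq[OF mt] unfolding TaE by simp
    show "(Ts has_real_derivative fs gs sB ea q beta (Ta t) (Ts t)) (at t within {- ss..0})"
      using DERIV_image_chain[OF e2 um] fs_eq[OF mt] unfolding TaE by simp
  qed
  show ?thesis using ss0 r1 r2 r3 by blast
qed
end
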